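(* Let $(S_t)_{t\in\mathbb{Z}}$ be a stationary process over a finite alphabet $\mathcal{A}$ that is order-$R$ Markovian for some integer $R\ge 1$, i.e. $\Pr(S_i\mid \ldots,S_{i-2},S_{i-1})=\Pr(S_i\mid S_{i-R},\ldots,S_{i-1})$. Then its synchronization information $\mathbf{S}$ and transient information $\mathbf{T}$ (defined below) satisfy $$\mathbf{S}=\mathbf{T}+\tfrac12 R(R+1)\,h_\mu .$$
   Context: For $L\ge1$ let $H(L)=-\sum_{s^L\in\mathcal{A}^L}\Pr(s^L)\log_2\Pr(s^L)$ be the Shannon entropy of the block $S_1\cdots S_L$, and set $H(0)=0$. Let $h_\mu(L)=H(L)-H(L-1)$ for $L\ge1$, let $h_\mu=\lim_{L\to\infty}H(L)/L$ (the entropy rate), and let $\mathbf{E}=\sum_{L=1}^\infty[h_\mu(L)-h_\mu]$ (the excess entropy). For an order-$R$ Markov process $\mathbf{E}$ is finite. The transient information is $\mathbf{T}=\sum_{L=0}^\infty[\mathbf{E}+h_\mu L-H(L)]$. Synchronization: the process is modeled as a Markov chain whose states are the $R$-blocks (states are in one-to-one correspondence with the words of length $R$; transitions slide the block by one symbol), with stationary distribution $\pi(s^R)=\Pr(s^R)$. An observer who knows this model but not the current state starts with distribution $\pi$ over the state $(S_1,\ldots,S_R)$, and after observing $s_1\cdots s_L$ holds the conditional distribution $\Pr(v\mid s^L)$ over states $v$ consistent with the observations: for $L\le R$ this is the conditional distribution of the $R$-block $(S_1,\ldots,S_R)$ given $S_1\cdots S_L=s^L$, and for $L\ge R$ the current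 state (the last $R$ observed symbols) is determined. The average state-uncertainty is $\mathcal{H}(L)=-\sum_{s^L}\Pr(s^L)\sum_v\Pr(v\mid s^L)\log_2\Pr(v\mid s^L)$, and the synchronization information is $\mathbf{S}=\sum_{L=0}^\infty\mathcal{H}(L)$. *)

theory Defs
  imports Complex_Main
begin

text \<open>A stationary process over the finite alphabet 'a is represented by its
  block (word) probabilities: p w = Pr(S_1 ... S_n = w) for a word w of length n.\<close>

definition words :: "nat \<Rightarrow> 'a list set" where
  "words L = {w. length w = L}"

definition stationary_process :: "('a::finite list \<Rightarrow> real) \<Rightarrow> bool" where
  "stationary_process p \<longleftrightarrow>
     p [] = 1 \<and> (\<forall>w. 0 \<le> p w) \<and>
     (\<forall>w. (\<Sum>a\<in>UNIV. p (w @ [a])) = p w) \<and>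
     (\<forall>w. (\<Sum>a\<in>UNIV. p (a # w)) = p w)"

text \<open>Order-R Markov: Pr(a | w) = Pr(a | last R symbols of w) whenever length w \<ge> R
  (written cross-multiplied to avoid division by zero).\<close>
definition markov_order :: "nat \<Rightarrow> ('a::finite list \<Rightarrow> real) \<Rightarrow> bool" where
  "markov_order R p \<longleftrightarrow>
     (\<forall>w a. R \<le> length w \<longrightarrow>
        p (w @ [a]) * p (drop (length w - R) w) = p w * p (drop (length w - R) w @ [a]))"

definition block_entropy :: "('a::finite list \<Rightarrow> real) \<Rightarrow> nat \<Rightarrow> real" where
  "block_entropy p L = - (\<Sum>w\<in>words L. p w * log 2 (p w))"

definition entropy_rate :: "('a::finite list \<Rightarrow> real) \<Rightarrow> real" where
  "entropy_rate p = lim (\<lambda>L. block_entropy p L / real L)"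

definition entropy_gain :: "('a::finite list \<Rightarrow> real) \<Rightarrow> nat \<Rightarrow> real" where
  "entropy_gain p L = block_entropy p L - block_entropy p (L - 1)"

definition excess_entropy :: "('a::finite list \<Rightarrow> real) \<Rightarrow> real" where
  "excess_entropy p = (\<Sum>L. entropy_gain p (Suc L) - entropy_rate p)"

definition transient_info :: "('a::finite list \<Rightarrow> real) \<Rightarrow> real" where
  "transient_info p =
     (\<Sum>L. excess_entropy p + entropy_rate p * real L - block_entropy p L)"

text \<open>Observer's conditional distribution over the R-block states v after observing s:
  for length s \<le> R it is Pr((S_1..S_R) = v | S_1..S_L = s); for length s \<ge> R
  the state is the last R observed symbols.\<close>
definition state_post :: "nat \<Rightarrow> ('a::finite list \<Rightarrow> real) \<Rightarrow> 'a list \<Rightarrow> 'a list \<Rightarrow> real" where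
  "state_post R p s v =
     (if length s \<le> R then (if take (length s) v = s then p v / p s else 0)
      else (if v = drop (length s - R) s then 1 else 0))"

definition state_uncertainty :: "nat \<Rightarrow> ('a::finite list \<Rightarrow> real) \<Rightarrow> nat \<Rightarrow> real" where
  "state_uncertainty R p L =
     - (\<Sum>s\<in>words L. p s * (\<Sum>v\<in>words R. state_post R p s v * log 2 (state_post R p s v)))"

definition sync_info :: "nat \<Rightarrow> ('a::finite list \<Rightarrow> real) \<Rightarrow> real" where
  "sync_info R p = (\<Sum>L. state_uncertainty R p L)"

end

theory Submission
  imports Defs
begin

lemma finite_words[simp]: "finite (words L :: 'a::finite list set)"
  unfolding words_def using finite_lists_length_eq[of "UNIV::'a set" L] by simp

lemma words_split_sum:
  fixes f :: "'a::finite list \<Rightarrow> real"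
  shows "(\<Sum>w\<in>words (m+n). f w) = (\<Sum>x\<in>words m. \<Sum>u\<in>words n. f (x@u))"
proof -
  have img: "(words (m+n) :: 'a list set) = (\<lambda>(x,u). x@u) ` (words m \<times> words n)"
  proof (rule equalityI)
    show "words (m+n) \<subseteq> (\<lambda>(x,u). x@u) ` (words m \<times> words n)"
    proof
      fix w assume "w \<in> words (m+n)"
      then show "w \<in> (\<lambda>(x,u). x@u) ` (words m \<times> words n)"
        by (auto simp: words_def intro!: image_eqI[where x="(take m w, drop m w)"])
    qed
  qed (auto simp: words_def)
  have inj: "inj_on (\<lambda>(x,u). x@u) (words m \<times> (words n :: 'a list set))"
    by (auto simp: inj_on_def words_def)
  have "(\<Sum>w\<in>words (m+n). f w) = (\<Sum>(x,u)\<in>words m \<times> words n. f (x@u))"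
    unfolding img by (subst sum.reindex[OF inj]) (simp add: case_prod_unfold)
  also have "\<dots> = (\<Sum>x\<in>words m. \<Sum>u\<in>words n. f (x@u))"
    by (simp add: sum.cartesian_product)
  finally show ?thesis .
qed

lemma words1_sum:
  fixes g :: "'a::finite list \<Rightarrow> real"
  shows "(\<Sum>x\<in>words (Suc 0). g x) = (\<Sum>a\<in>UNIV. g [a])"
proof -
  have "words (Suc 0) = (\<lambda>a. [a]) ` (UNIV::'a set)"
    by (auto simp: words_def length_Suc_conv)
  moreover have "inj (\<lambda>a::'a. [a])" by (auto simp: inj_on_def)
  ultimately show ?thesis by (simp add: sum.reindex)
qed

lemma words0: "words 0 = {[]}" by (auto simp: words_def)

lemma sum_snoc:
  fixes f :: "'a::finite list \<Rightarrow> real"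
  shows "(\<Sum>w\<in>words (Suc n). f w) = (\<Sum>x\<in>words n. \<Sum>a\<in>UNIV. f (x@[a]))"
proof -
  have "(\<Sum>w\<in>words (Suc n). f w) = (\<Sum>x\<in>words n. \<Sum>u\<in>words (Suc 0). f (x@u))"
    using words_split_sum[of f n "Suc 0"] by simp
  also have "\<dots> = (\<Sum>x\<in>words n. \<Sum>a\<in>UNIV. f (x@[a]))" by (simp add: words1_sum)
  finally show ?thesis .
qed

lemma sum_cons:
  fixes f :: "'a::finite list \<Rightarrow> real"
  shows "(\<Sum>w\<in>words (Suc n). f w) = (\<Sum>a\<in>UNIV. \<Sum>x\<in>words n. f (a#x))"
  using words_split_sum[of f "Suc 0" n] words1_sum[of "\<lambda>y. \<Sum>u\<in>words n. f (y@u)"] by simp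

context
  fixes p :: "'a::finite list \<Rightarrow> real"
  assumes st: "stationary_process p"
begin

lemma p_nonneg: "0 \<le> p w" using st by (simp add: stationary_process_def)

lemma sum_pref: "(\<Sum>x\<in>words m. p (x@u)) = p u"
proof (induction m)
  case 0 then show ?case by (simp add: words0)
next
  case (Suc m)
  have "(\<Sum>x\<in>words (Suc m). p (x@u)) = (\<Sum>a\<in>UNIV. \<Sum>x\<in>words m. p (a#(x@u)))"
    by (simp add: sum_cons)
  also have "\<dots> = (\<Sum>x\<in>words m. \<Sum>a\<in>UNIV. p (a#(x@u)))" by (rule sum.swap)
  also have "\<dots> = (\<Sum>x\<in>words m. p (x@u))" using st by (simp add: stationary_process_def)
  finally show ?case using Suc by simp
qed

lemma sum_suf: "(\<Sum>u\<in>words n. p (x@u)) = p x"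
proof (induction n)
  case 0 then show ?case by (simp add: words0)
next
  case (Suc n)
  have "(\<Sum>u\<in>words (Suc n). p (x@u)) = (\<Sum>u\<in>words n. \<Sum>a\<in>UNIV. p ((x@u)@[a]))"
    by (simp add: sum_snoc)
  also have "\<dots> = (\<Sum>u\<in>words n. p (x@u))"
  proof (rule sum.cong)
    fix u show "(\<Sum>a\<in>UNIV. p ((x@u)@[a])) = p (x@u)" using st by (simp only: stationary_process_def)
  qed simp
  finally show ?case using Suc by simp
qed

lemma le_suf: "p (x@u) \<le> p u"
proof -
  have "p (x@u) \<le> (\<Sum>y\<in>words (length x). p (y@u))"
    using finite_words by (intro member_le_sum) (auto simp: words_def p_nonneg)
  then show ?thesis by (simp add: sum_pref)
qed

lemma le_pref: "p (x@u) \<le> p x"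
proof -
  have "p (x@u) \<le> (\<Sum>y\<in>words (length u). p (x@y))"
    using finite_words by (intro member_le_sum) (auto simp: words_def p_nonneg)
  then show ?thesis by (simp add: sum_suf)
qed


definition xlog :: "real \<Rightarrow> real" where "xlog t = t * log 2 t"

lemma xlog_mult: "0 \<le> x \<Longrightarrow> 0 \<le> c \<Longrightarrow> xlog (x * c) = c * xlog x + x * xlog c"
  by (cases "x = 0 \<or> c = 0") (auto simp: xlog_def log_mult algebra_simps)

lemma H_def': "block_entropy p L = - (\<Sum>w\<in>words L. xlog (p w))"
  by (simp add: block_entropy_def xlog_def)

lemma H0: "block_entropy p 0 = 0"
  using st by (simp add: H_def' words0 xlog_def stationary_process_def)

definition G :: "'a list \<Rightarrow> real" where
  "G u = (\<Sum>a\<in>UNIV. xlog (p (u@[a]) / p u))"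

definition K :: "nat \<Rightarrow> real" where "K R = (\<Sum>u\<in>words R. p u * G u)"

context
  fixes R :: nat
  assumes mk: "markov_order R p"
begin

lemma cond:
  assumes "length w = L" "R \<le> L"
  shows "p (w@[a]) = p w * (p (drop (L-R) w @ [a]) / p (drop (L-R) w))"
proof -
  let ?u = "drop (L-R) w"
  have m: "p (w @ [a]) * p ?u = p w * p (?u @ [a])"
    using mk assms unfolding markov_order_def by auto
  show ?thesis
  proof (cases "p ?u = 0")
    case True
    have "p w \<le> p ?u" using le_suf[of "take (L-R) w" ?u] by simp
    then have "p w = 0" using True p_nonneg[of w] by simp
    moreover have "p (w@[a]) \<le> p w" by (rule le_pref)
    ultimately have "p (w@[a]) = 0" using p_nonneg[of "w@[a]"] by simp
    then show ?thesis using True by simp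
  next
    case False
    then show ?thesis using m by (simp add: field_simps)
  qed
qed

lemma sum_a:
  assumes "length w = L" "R \<le> L"
  shows "(\<Sum>a\<in>UNIV. xlog (p (w@[a]))) = xlog (p w) + p w * G (drop (L-R) w)"
proof -
  let ?u = "drop (L-R) w"
  have "(\<Sum>a\<in>UNIV. xlog (p (w@[a]))) = (\<Sum>a\<in>UNIV. (p (?u@[a]) / p ?u) * xlog (p w) + p w * xlog (p (?u@[a]) / p ?u))"
    by (intro sum.cong refl, simp only: cond[OF assms], rule xlog_mult) (auto simp: p_nonneg)
  also have "\<dots> = (\<Sum>a\<in>UNIV. p (?u@[a])) / p ?u * xlog (p w) + p w * G ?u"
    by (simp add: sum.distrib G_def sum_distrib_left sum_distrib_right sum_divide_distrib)
  also have "\<dots> = xlog (p w) + p w * G ?u"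
  proof (cases "p ?u = 0")
    case True
    have "p w \<le> p ?u" using le_suf[of "take (L-R) w" ?u] by simp
    then have "p w = 0" using True p_nonneg[of w] by simp
    then show ?thesis by (simp add: xlog_def)
  next
    case False
    then show ?thesis using st by (simp add: stationary_process_def)
  qed
  finally show ?thesis .
qed

lemma H_step:
  assumes "R \<le> L"
  shows "block_entropy p (Suc L) = block_entropy p L - K R"
proof -
  have "block_entropy p (Suc L) = - (\<Sum>w\<in>words L. \<Sum>a\<in>UNIV. xlog (p (w@[a])))"
    by (simp add: H_def' sum_snoc)
  also have "\<dots> = - (\<Sum>w\<in>words L. xlog (p w) + p w * G (drop (L-R) w))"
    using sum_a assms by (simp add: words_def)
  also have "\<dots> = block_entropy p L - (\<Sum>w\<in>words L. p w * G (drop (L-R) w))"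
    by (simp add: H_def' sum.distrib)
  also have "(\<Sum>w\<in>words L. p w * G (drop (L-R) w)) = K R"
  proof -
    have "(\<Sum>w\<in>words L. p w * G (drop (L-R) w)) = (\<Sum>w\<in>words ((L-R)+R). p w * G (drop (L-R) w))"
      using assms by simp
    also have "\<dots> = (\<Sum>x\<in>words (L-R). \<Sum>u\<in>words R. p (x@u) * G (drop (L-R) (x@u)))"
      by (rule words_split_sum)
    also have "\<dots> = (\<Sum>x\<in>words (L-R). \<Sum>u\<in>words R. p (x@u) * G u)"
      by (intro sum.cong refl) (simp add: words_def)
    also have "\<dots> = (\<Sum>u\<in>words R. \<Sum>x\<in>words (L-R). p (x@u) * G u)"
      by (rule sum.swap)
    also have "\<dots> = K R"
      by (simp add: K_def sum_distrib_right[symmetric] sum_pref)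
    finally show ?thesis .
  qed
  finally show ?thesis .
qed

lemma HL:
  assumes "R \<le> L"
  shows "block_entropy p L = block_entropy p R - real (L-R) * K R"
  using assms
proof (induction L rule: dec_induct)
  case base then show ?case by simp
next
  case (step n)
  then show ?case using H_step[of n] by (simp add: Suc_diff_le algebra_simps)
qed

end


lemma su_gt:
  assumes "R < L"
  shows "state_uncertainty R p L = 0"
proof -
  have z: "state_post R p s v * log 2 (state_post R p s v) = 0" if "length s = L" for s v
    using assms that by (simp add: state_post_def)
  show ?thesis by (simp add: state_uncertainty_def words_def z)
qed

lemma su_le:
  assumes "L \<le> R"
  shows "state_uncertainty R p L = block_entropy p R - block_entropy p L"
proof -
  have pw: "p s * (state_post R p s v * log 2 (state_post R p s v)) =
      (if take L v = s then xlog (p v) - p v * log 2 (p s) else 0)"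
    if "s \<in> words L" "v \<in> words R" for s v
  proof (cases "take L v = s")
    case True
    have ls: "length s = L" using that by (simp add: words_def)
    have "v = s @ drop L v" using True by (metis append_take_drop_id)
    then have le: "p v \<le> p s" using le_pref[of s "drop L v"] by simp
    show ?thesis
    proof (cases "p v = 0")
      case True
      then show ?thesis using \<open>take L v = s\<close> ls assms by (simp add: state_post_def xlog_def)
    next
      case False
      then have "p v > 0" using p_nonneg[of v] by simp
      then have "p s > 0" using le by simp
      then show ?thesis using \<open>take L v = s\<close> ls assms \<open>p v > 0\<close>
        by (simp add: state_post_def xlog_def log_divide algebra_simps)
    qed
  next
    case False
    have ls: "length s = L" using that by (simp add: words_def)
    then show ?thesis using False assms by (simp add: state_post_def)
  qed
  have "(\<Sum>s\<in>words L. p s * (\<Sum>v\<in>words R. state_post R p s v * log 2 (state_post R p s v)))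
      = (\<Sum>s\<in>words L. \<Sum>v\<in>words R. (if take L v = s then xlog (p v) - p v * log 2 (p s) else 0))"
    using pw by (simp add: sum_distrib_left)
  also have "\<dots> = (\<Sum>v\<in>words R. \<Sum>s\<in>words L. (if take L v = s then xlog (p v) - p v * log 2 (p s) else 0))"
    by (rule sum.swap)
  also have "\<dots> = (\<Sum>v\<in>words R. xlog (p v) - p v * log 2 (p (take L v)))"
    using assms by (intro sum.cong refl, subst sum.delta'[OF finite_words]) (auto simp: words_def)
  also have "\<dots> = - block_entropy p R - (\<Sum>v\<in>words R. p v * log 2 (p (take L v)))"
    by (simp add: H_def' sum_subtractf)
  also have "(\<Sum>v\<in>words R. p v * log 2 (p (take L v))) = - block_entropy p L"
  proof -
    have "(\<Sum>v\<in>words R. p v * log 2 (p (take L v))) = (\<Sum>v\<in>words (L + (R-L)). p v * log 2 (p (take L v)))"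
      using assms by simp
    also have "\<dots> = (\<Sum>x\<in>words L. \<Sum>u\<in>words (R-L). p (x@u) * log 2 (p (take L (x@u))))"
      by (rule words_split_sum)
    also have "\<dots> = (\<Sum>x\<in>words L. \<Sum>u\<in>words (R-L). p (x@u) * log 2 (p x))"
      by (intro sum.cong refl) (simp add: words_def)
    also have "\<dots> = (\<Sum>x\<in>words L. xlog (p x))"
      by (simp add: sum_distrib_right[symmetric] sum_suf xlog_def)
    finally show ?thesis by (simp add: H_def')
  qed
  finally show ?thesis by (simp add: state_uncertainty_def)
qed

end

lemma gauss_sum: "(\<Sum>L<R. (real R - real L)) = real R * (real R + 1) / 2"
proof (induction R)
  case 0 then show ?case by simp
next
  case (Suc R)
  have "(\<Sum>L<Suc R. (real (Suc R) - real L)) = (\<Sum>L<R. (1 + (real R - real L))) + 1"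
    by (simp add: algebra_simps)
  also have "\<dots> = (\<Sum>L<R. (real R - real L)) + real R + 1"
    by (simp add: sum.distrib)
  finally have "(\<Sum>L<Suc R. (real (Suc R) - real L)) = (\<Sum>L<R. (real R - real L)) + real R + 1" .
  then show ?case using Suc by (simp add: field_simps)
qed

theorem theorem1:
  fixes p :: "'a::finite list \<Rightarrow> real" and R :: nat
  assumes "stationary_process p" and "1 \<le> R" and "markov_order R p"
  shows "sync_info R p = transient_info p + 1/2 * real R * (real R + 1) * entropy_rate p"
proof -
  note st = assms(1) and mk = assms(3)
  define H where "H = block_entropy p"
  define k where "k = K p R"
  have HL': "H L = H R - real (L-R) * k" if "R \<le> L" for L
    using HL[OF st mk that] by (simp add: H_def k_def)
  have step': "H (Suc L) = H L - k" if "R \<le> L" for L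
    using H_step[OF st mk that] by (simp add: H_def k_def)
  have H0': "H 0 = 0" using H0[OF st] by (simp add: H_def)
  have rate: "entropy_rate p = - k"
  proof -
    have ev: "\<forall>\<^sub>F L in sequentially. (H R + real R * k) / real L + (- k) = H L / real L"
      unfolding eventually_sequentially
    proof (intro exI allI impI)
      fix L assume "R \<le> L"
      then have "L > 0" using assms(2) by simp
      then show "(H R + real R * k) / real L + (- k) = H L / real L"
        using HL'[OF \<open>R \<le> L\<close>] \<open>R \<le> L\<close> by (simp add: field_simps of_nat_diff)
    qed
    have "(\<lambda>L. (H R + real R * k) / real L + (- k)) \<longlonglongrightarrow> 0 + (- k)"
      by (intro tendsto_add lim_const_over_n tendsto_const)
    then have "(\<lambda>L. H L / real L) \<longlonglongrightarrow> - k"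
      using ev by (simp add: tendsto_cong)
    then show ?thesis unfolding entropy_rate_def H_def by (rule limI)
  qed
  have E: "excess_entropy p = H R + real R * k"
  proof -
    have "excess_entropy p = (\<Sum>L<R. entropy_gain p (Suc L) - entropy_rate p)"
      unfolding excess_entropy_def
      by (rule suminf_finite) (auto simp: entropy_gain_def rate step'[folded H_def] H_def[symmetric] step')
    also have "\<dots> = (\<Sum>L<R. H (Suc L) - H L) + real R * k"
      by (simp add: entropy_gain_def rate H_def sum.distrib)
    also have "\<dots> = H R + real R * k"
      by (simp add: sum_lessThan_telescope H0')
    finally show ?thesis .
  qed
  have T: "transient_info p = (\<Sum>L<R. H R + real R * k - k * real L - H L)"
  proof -
    have "transient_info p = (\<Sum>L<R. excess_entropy p + entropy_rate p * real L - block_entropy p L)"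
      unfolding transient_info_def
    proof (rule suminf_finite)
      fix L assume "L \<notin> {..<R}"
      then have "R \<le> L" by simp
      then show "excess_entropy p + entropy_rate p * real L - block_entropy p L = 0"
        using HL'[OF \<open>R \<le> L\<close>] by (simp add: E rate H_def[symmetric] of_nat_diff algebra_simps)
    qed simp
    then show ?thesis by (simp add: E rate H_def algebra_simps)
  qed
  have S: "sync_info R p = (\<Sum>L<R. H R - H L)"
  proof -
    have "sync_info R p = (\<Sum>L<R. state_uncertainty R p L)"
      unfolding sync_info_def
    proof (rule suminf_finite)
      fix L assume "L \<notin> {..<R}"
      then have "R = L \<or> R < L" by auto
      then show "state_uncertainty R p L = 0"
        using su_le[OF st, of R R] su_gt[OF st] by auto
    qed simp
    then show ?thesis by (simp add: su_le[OF st] H_def)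
  qed
  have "(\<Sum>L<R. H R - H L) - (\<Sum>L<R. H R + real R * k - k * real L - H L) = - k * (\<Sum>L<R. (real R - real L))"
    by (simp add: sum_subtractf[symmetric] sum_distrib_left algebra_simps)
  then have d: "(\<Sum>L<R. H R - H L) - (\<Sum>L<R. H R + real R * k - k * real L - H L) = - k * (real R * (real R + 1) / 2)"
    using gauss_sum[of R] by simp
  show ?thesis unfolding S T rate using d by (simp add: field_simps)
qed

end
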